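(* Let $\kappa=k_1k_2\cdots k_s$ where $k_1\le\cdots\le k_s$ are primes, and $\mathbb Z^\kappa=\mathbb Z_{k_1}\times\cdots\times\mathbb Z_{k_s}$. Consider the linear control network $\Sigma$ over $\mathbb Z^\kappa$: $Z(t+1)=AZ(t)+BU(t)$, $Y(t)=CZ(t)$, with $Z(t)\in(\mathbb Z^\kappa)^n$, $U(t)\in(\mathbb Z^\kappa)^m$, $Y(t)\in(\mathbb Z^\kappa)^p$, $A\in(\mathbb Z^\kappa)^{n\times n}$, $B\in(\mathbb Z^\kappa)^{n\times m}$, $C\in(\mathbb Z^\kappa)^{p\times n}$, all operations in $\mathbb Z^\kappa$. For $i\in[1,s]$ let $\Sigma_i$ be the linear control network over $\mathbb Z_{k_i}$: $X^i(t+1)=A^iX^i(t)+B^iU^i(t)$, $Y^i(t)=C^iX^i(t)$, where $A^i=\phi_i(A)$, $B^i=\phi_i(B)$, $C^i=\phi_i(C)$ (entrywise projections). Then $\Sigma=\Sigma_1\times\Sigma_2\times\cdots\times\Sigma_s$, and $\Sigma$ is controllable (respectively observable) if and only if every $\Sigma_i$, $i\in[1,s]$, is controllable (respectively observable).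
   Context: $\mathbb Z_p$ is the ring of integers modulo $p$; $\mathbb Z^\kappa$ has componentwise operations, and $\phi_i:\mathbb Z^\kappa\to\mathbb Z_{k_i}$ is the $i$-th coordinate projection. $\Sigma=\Sigma_1\times\cdots\times\Sigma_s$ means: for every initial state and control sequence of $\Sigma$, the $i$-th coordinate of the trajectory of $\Sigma$ equals the trajectory of $\Sigma_i$ started at the $i$-th coordinate of the initial state and driven by the $i$-th coordinates of the controls. Controllable means: for any initial state $z_0$ and target $z_d$ there exist $T\ge0$ and a control sequence steering $z_0$ to $z_d$ at time $T$. Observable means: any two distinct initial states can be distinguished by the outputs under some control sequence. *)

theory Defs
  imports "HOL-Computational_Algebra.Primes"
begin

record 'a rng =
  car :: "'a set"
  ad  :: "'a \<Rightarrow> 'a \<Rightarrow> 'a"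
  mu  :: "'a \<Rightarrow> 'a \<Rightarrow> 'a"
  ze  :: 'a

definition Zmod :: "nat \<Rightarrow> int rng" where
  "Zmod q = \<lparr> car = {0..<int q}, ad = (\<lambda>a b. (a + b) mod int q),
             mu = (\<lambda>a b. (a * b) mod int q), ze = 0 \<rparr>"

text \<open>The ring Z^kappa = Z_{k_1} x ... x Z_{k_s}, ks = [k_1,...,k_s]; elements are functions
  on the index set {0..<s} (component i is the (i+1)-th coordinate), extended by 0.\<close>
definition Zprod :: "nat list \<Rightarrow> (nat \<Rightarrow> int) rng" where
  "Zprod ks = \<lparr> car = {z. (\<forall>i<length ks. 0 \<le> z i \<and> z i < int (ks ! i)) \<and> (\<forall>i\<ge>length ks. z i = 0)},
     ad = (\<lambda>a b i. if i < length ks then (a i + b i) mod int (ks ! i) else 0),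
     mu = (\<lambda>a b i. if i < length ks then (a i * b i) mod int (ks ! i) else 0),
     ze = (\<lambda>i. 0) \<rparr>"

definition proj :: "nat \<Rightarrow> (nat \<Rightarrow> int) \<Rightarrow> int" where
  "proj i z = z i"

definition proj_vec :: "nat \<Rightarrow> (nat \<Rightarrow> int) list \<Rightarrow> int list" where
  "proj_vec i v = map (proj i) v"

definition proj_mat :: "nat \<Rightarrow> (nat \<Rightarrow> int) list list \<Rightarrow> int list list" where
  "proj_mat i M = map (proj_vec i) M"

text \<open>Vectors are lists, matrices are lists of rows.\<close>
definition vecs :: "'a rng \<Rightarrow> nat \<Rightarrow> 'a list set" where
  "vecs R k = {v. length v = k \<and> set v \<subseteq> car R}"

definition is_mat :: "'a rng \<Rightarrow> nat \<Rightarrow> nat \<Rightarrow> 'a list list \<Rightarrow> bool" where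
  "is_mat R r c M \<longleftrightarrow> length M = r \<and> (\<forall>row\<in>set M. row \<in> vecs R c)"

definition mat_vec :: "'a rng \<Rightarrow> 'a list list \<Rightarrow> 'a list \<Rightarrow> 'a list" where
  "mat_vec R M v = map (\<lambda>row. foldr (ad R) (map2 (mu R) row v) (ze R)) M"

definition vec_add :: "'a rng \<Rightarrow> 'a list \<Rightarrow> 'a list \<Rightarrow> 'a list" where
  "vec_add R u v = map2 (ad R) u v"

fun traj :: "'a rng \<Rightarrow> 'a list list \<Rightarrow> 'a list list \<Rightarrow> 'a list \<Rightarrow> (nat \<Rightarrow> 'a list) \<Rightarrow> nat \<Rightarrow> 'a list" where
  "traj R A B x0 us 0 = x0"
| "traj R A B x0 us (Suc t) = vec_add R (mat_vec R A (traj R A B x0 us t)) (mat_vec R B (us t))"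

definition net_output :: "'a rng \<Rightarrow> 'a list list \<Rightarrow> 'a list list \<Rightarrow> 'a list list \<Rightarrow> 'a list \<Rightarrow> (nat \<Rightarrow> 'a list) \<Rightarrow> nat \<Rightarrow> 'a list" where
  "net_output R A B C x0 us t = mat_vec R C (traj R A B x0 us t)"

definition controls :: "'a rng \<Rightarrow> nat \<Rightarrow> (nat \<Rightarrow> 'a list) set" where
  "controls R m = {us. \<forall>t. us t \<in> vecs R m}"

definition controllable :: "'a rng \<Rightarrow> nat \<Rightarrow> nat \<Rightarrow> 'a list list \<Rightarrow> 'a list list \<Rightarrow> bool" where
  "controllable R n m A B \<longleftrightarrow>
     (\<forall>z0\<in>vecs R n. \<forall>zd\<in>vecs R n. \<exists>T. \<exists>us\<in>controls R m. traj R A B z0 us T = zd)"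

definition observable :: "'a rng \<Rightarrow> nat \<Rightarrow> nat \<Rightarrow> 'a list list \<Rightarrow> 'a list list \<Rightarrow> 'a list list \<Rightarrow> bool" where
  "observable R n m A B C \<longleftrightarrow>
     (\<forall>x0\<in>vecs R n. \<forall>x1\<in>vecs R n. x0 \<noteq> x1 \<longrightarrow>
        (\<exists>us\<in>controls R m. \<exists>t. net_output R A B C x0 us t \<noteq> net_output R A B C x1 us t))"

text \<open>Sigma = Sigma_1 x ... x Sigma_s (trajectory-wise, as in the paper's definition).\<close>
definition is_product :: "nat list \<Rightarrow> nat \<Rightarrow> nat \<Rightarrow> (nat \<Rightarrow> int) list list \<Rightarrow> (nat \<Rightarrow> int) list list \<Rightarrow> bool" where
  "is_product ks n m A B \<longleftrightarrow>
     (\<forall>z0\<in>vecs (Zprod ks) n. \<forall>us\<in>controls (Zprod ks) m. \<forall>t. \<forall>i<length ks.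
        proj_vec i (traj (Zprod ks) A B z0 us t)
        = traj (Zmod (ks ! i)) (proj_mat i A) (proj_mat i B) (proj_vec i z0) (\<lambda>t. proj_vec i (us t)) t)"

end

theory Submission
  imports Defs
begin

lemma foldr_proj:
  assumes "i < length ks"
  shows "proj i (foldr (ad (Zprod ks)) xs (ze (Zprod ks)))
       = foldr (ad (Zmod (ks!i))) (map (proj i) xs) (ze (Zmod (ks!i)))"
  using assms by (induction xs) (auto simp: Zprod_def Zmod_def proj_def)

lemma map2_proj:
  assumes "i < length ks"
  shows "map (proj i) (map2 (mu (Zprod ks)) xs ys)
       = map2 (mu (Zmod (ks!i))) (map (proj i) xs) (map (proj i) ys)"
  using assms
proof (induction xs arbitrary: ys)
  case Nil then show ?case by simp
next
  case (Cons a xs) then show ?case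
    by (cases ys) (auto simp: Zprod_def Zmod_def proj_def)
qed

lemma map2_ad_proj:
  assumes "i < length ks"
  shows "map (proj i) (map2 (ad (Zprod ks)) xs ys)
       = map2 (ad (Zmod (ks!i))) (map (proj i) xs) (map (proj i) ys)"
  using assms
proof (induction xs arbitrary: ys)
  case Nil then show ?case by simp
next
  case (Cons a xs) then show ?case
    by (cases ys) (auto simp: Zprod_def Zmod_def proj_def)
qed

lemma row_proj:
  "i < length ks \<Longrightarrow> proj i (foldr (ad (Zprod ks)) (map2 (mu (Zprod ks)) row v) (ze (Zprod ks)))
    = foldr (ad (Zmod (ks!i))) (map2 (mu (Zmod (ks!i))) (map (proj i) row) (map (proj i) v)) (ze (Zmod (ks!i)))"
  by (simp only: foldr_proj map2_proj)

lemma mat_vec_proj: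
  "i < length ks \<Longrightarrow> proj_vec i (mat_vec (Zprod ks) M v)
     = mat_vec (Zmod (ks!i)) (proj_mat i M) (proj_vec i v)"
  unfolding mat_vec_def proj_vec_def proj_mat_def map_map
  by (rule map_cong[OF refl]) (simp only: comp_def row_proj)

lemma vec_add_proj:
  "i < length ks \<Longrightarrow> proj_vec i (vec_add (Zprod ks) u v)
     = vec_add (Zmod (ks!i)) (proj_vec i u) (proj_vec i v)"
  unfolding vec_add_def proj_vec_def by (rule map2_ad_proj)

lemma traj_proj:
  "i < length ks \<Longrightarrow> proj_vec i (traj (Zprod ks) A B z0 us t)
     = traj (Zmod (ks!i)) (proj_mat i A) (proj_mat i B) (proj_vec i z0) (\<lambda>t. proj_vec i (us t)) t"
  by (induction t) (simp_all add: vec_add_proj mat_vec_proj)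

lemma output_proj:
  "i < length ks \<Longrightarrow> proj_vec i (net_output (Zprod ks) A B C z0 us t)
     = net_output (Zmod (ks!i)) (proj_mat i A) (proj_mat i B) (proj_mat i C) (proj_vec i z0) (\<lambda>t. proj_vec i (us t)) t"
  by (simp add: net_output_def mat_vec_proj traj_proj)

definition zo :: "nat list \<Rightarrow> (nat \<Rightarrow> int) list \<Rightarrow> bool" where
  "zo ks v \<longleftrightarrow> (\<forall>x\<in>set v. \<forall>j\<ge>length ks. x j = 0)"

lemma zo_foldr: "j \<ge> length ks \<Longrightarrow> foldr (ad (Zprod ks)) xs (ze (Zprod ks)) j = 0"
  by (cases xs) (auto simp: Zprod_def)

lemma zo_mat_vec: "zo ks (mat_vec (Zprod ks) M v)"
  by (auto simp: zo_def mat_vec_def zo_foldr)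

lemma zo_vec_add: "zo ks (vec_add (Zprod ks) u v)"
  by (auto simp: zo_def vec_add_def Zprod_def dest!: set_zip_leftD)

lemma zo_vecs: "v \<in> vecs (Zprod ks) k \<Longrightarrow> zo ks v"
  by (auto simp: zo_def vecs_def Zprod_def)

lemma zo_traj: "z0 \<in> vecs (Zprod ks) k \<Longrightarrow> zo ks (traj (Zprod ks) A B z0 us t)"
  by (cases t) (simp_all add: zo_vecs zo_vec_add)

lemma zo_output: "zo ks (net_output (Zprod ks) A B C z0 us t)"
  by (simp add: net_output_def zo_mat_vec)

lemma length_traj:
  "length z0 = n \<Longrightarrow> length A = n \<Longrightarrow> length B = n \<Longrightarrow> length (traj R A B z0 us t) = n"
  by (induction t) (simp_all add: vec_add_def mat_vec_def)

lemma vec_ext: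
  assumes "length v = length w" "zo ks v" "zo ks w"
    and "\<forall>i<length ks. proj_vec i v = proj_vec i w"
  shows "v = w"
proof (rule nth_equalityI)
  show "length v = length w" by fact
  fix k assume k: "k < length v"
  show "v ! k = w ! k"
  proof
    fix j
    show "(v ! k) j = (w ! k) j"
    proof (cases "j < length ks")
      case True
      then have "proj_vec j v ! k = proj_vec j w ! k" using assms(4) by simp
      then show ?thesis using k assms(1) by (simp add: proj_vec_def proj_def)
    next
      case False
      have "v ! k \<in> set v" "w ! k \<in> set w" using k assms(1) by auto
      then show ?thesis using assms(2,3) False by (auto simp: zo_def)
    qed
  qed
qed

lemma row_zero: "foldr (ad (Zmod q)) (map2 (mu (Zmod q)) row (replicate k 0)) 0 = 0"
proof (induction row arbitrary: k)
  case Nil then show ?case by simp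
next
  case (Cons a row) then show ?case
    by (cases k) (auto simp: Zmod_def)
qed

lemma mat_vec_zero: "mat_vec (Zmod q) M (replicate k 0) = replicate (length M) 0"
proof -
  have "ze (Zmod q) = 0" by (simp add: Zmod_def)
  then show ?thesis
    by (simp add: mat_vec_def row_zero map_replicate_const[symmetric] del: map_replicate_const)
qed

lemma traj_zero:
  "length A = n \<Longrightarrow> length B = n \<Longrightarrow>
   traj (Zmod q) A B (replicate n 0) (\<lambda>_. replicate m 0) t = replicate n 0"
  by (induction t) (simp_all add: mat_vec_zero vec_add_def zip_replicate, simp add: Zmod_def)

lemma traj_shift:
  "traj R A B x0 us (a + b) = traj R A B (traj R A B x0 us a) (\<lambda>t. us (a + t)) b"
  by (induction b) simp_all

lemma traj_cong:
  "(\<forall>t<T. us t = vs t) \<Longrightarrow> traj R A B x us T = traj R A B x vs T"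
  by (induction T) simp_all

lemma traj_concat:
  "traj R A B x (\<lambda>t. if t < a then us t else vs (t - a)) (a + b) = traj R A B (traj R A B x us a) vs b"
proof -
  let ?w = "\<lambda>t. if t < a then us t else vs (t - a)"
  have "traj R A B x ?w (a + b) = traj R A B (traj R A B x ?w a) (\<lambda>t. ?w (a + t)) b"
    by (rule traj_shift)
  moreover have "traj R A B x ?w a = traj R A B x us a" by (rule traj_cong) simp
  moreover have "(\<lambda>t. ?w (a + t)) = vs" by auto
  ultimately show ?thesis by simp
qed

lemma zero_vecs: "0 < q \<Longrightarrow> replicate n 0 \<in> vecs (Zmod q) n"
  by (auto simp: vecs_def Zmod_def)

lemma finite_vecs: "finite (vecs (Zmod q) n)"
proof -
  have "vecs (Zmod q) n \<subseteq> {xs. set xs \<subseteq> {0..<int q} \<and> length xs = n}"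
    by (auto simp: vecs_def Zmod_def)
  moreover have "finite {xs. set xs \<subseteq> {0..<int q} \<and> length xs = n}"
    by (rule finite_lists_length_eq) simp
  ultimately show ?thesis by (rule finite_subset)
qed

lemma concat_controls:
  "us \<in> controls R m \<Longrightarrow> vs \<in> controls R m \<Longrightarrow> (\<lambda>t. if t < a then us t else vs (t - a)) \<in> controls R m"
  by (auto simp: controls_def)

lemma uniform:
  assumes ctrl: "controllable (Zmod q) n m A B" and lA: "length A = n" and lB: "length B = n"
    and q: "0 < q"
  shows "\<exists>K. \<forall>T\<ge>K. \<forall>z0\<in>vecs (Zmod q) n. \<forall>zd\<in>vecs (Zmod q) n.
           \<exists>us\<in>controls (Zmod q) m. traj (Zmod q) A B z0 us T = zd"
proof -
  define V where "V = vecs (Zmod q) n"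
  define z where "z = replicate n (0::int)"
  define zc where "zc = (\<lambda>_::nat. replicate m (0::int))"
  have zV: "z \<in> V" using q by (simp add: z_def V_def zero_vecs)
  have zc: "zc \<in> controls (Zmod q) m" using q by (simp add: zc_def controls_def zero_vecs)
  have finV: "finite V" by (simp add: V_def finite_vecs)
  have "\<forall>x\<in>V. \<exists>T. \<exists>us\<in>controls (Zmod q) m. traj (Zmod q) A B x us T = z"
    using ctrl zV unfolding controllable_def V_def by blast
  then obtain T1 U1 where T1: "\<forall>x\<in>V. U1 x \<in> controls (Zmod q) m \<and> traj (Zmod q) A B x (U1 x) (T1 x) = z"
    by metis
  have "\<forall>x\<in>V. \<exists>T. \<exists>us\<in>controls (Zmod q) m. traj (Zmod q) A B z us T = x"
    using ctrl zV unfolding controllable_def V_def by blast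
  then obtain T2 U2 where T2: "\<forall>x\<in>V. U2 x \<in> controls (Zmod q) m \<and> traj (Zmod q) A B z (U2 x) (T2 x) = x"
    by metis
  define K1 where "K1 = Max (T1 ` V)"
  define K2 where "K2 = Max (T2 ` V)"
  show ?thesis
  proof (intro exI allI impI ballI)
    fix T z0 zd assume T: "K1 + K2 \<le> T" and z0: "z0 \<in> vecs (Zmod q) n" and zd: "zd \<in> vecs (Zmod q) n"
    then have z0V: "z0 \<in> V" and zdV: "zd \<in> V" by (auto simp: V_def)
    have a: "T1 z0 \<le> K1" unfolding K1_def using finV z0V by simp
    have c: "T2 zd \<le> K2" unfolding K2_def using finV zdV by simp
    define a' where "a' = T1 z0"
    define c' where "c' = T2 zd"
    define b' where "b' = T - a' - c'"
    have Teq: "T = a' + (b' + c')" using a c T by (simp add: a'_def b'_def c'_def)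
    define inner where "inner = (\<lambda>t. if t < b' then zc t else U2 zd (t - b'))"
    define us where "us = (\<lambda>t. if t < a' then U1 z0 t else inner (t - a'))"
    have "us \<in> controls (Zmod q) m"
      unfolding us_def inner_def using T1 T2 z0V zdV zc by (intro concat_controls) auto
    moreover have "traj (Zmod q) A B z0 us T = zd"
    proof -
      have "traj (Zmod q) A B z0 us T = traj (Zmod q) A B (traj (Zmod q) A B z0 (U1 z0) a') inner (b' + c')"
        unfolding Teq us_def by (rule traj_concat)
      also have "\<dots> = traj (Zmod q) A B z inner (b' + c')" using T1 z0V by (simp add: a'_def)
      also have "\<dots> = traj (Zmod q) A B (traj (Zmod q) A B z zc b') (U2 zd) c'"
        unfolding inner_def by (rule traj_concat)
      also have "\<dots> = traj (Zmod q) A B z (U2 zd) c'"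
        using lA lB by (simp add: z_def zc_def traj_zero)
      also have "\<dots> = zd" using T2 zdV by (simp add: c'_def)
      finally show ?thesis .
    qed
    ultimately show "\<exists>us\<in>controls (Zmod q) m. traj (Zmod q) A B z0 us T = zd" by blast
  qed
qed

definition liftv :: "nat \<Rightarrow> int list \<Rightarrow> (nat \<Rightarrow> int) list" where
  "liftv i v = map (\<lambda>a j. if j = i then a else 0) v"

lemma liftv_vecs: "\<forall>j<length ks. 0 < ks!j \<Longrightarrow> i < length ks \<Longrightarrow> v \<in> vecs (Zmod (ks!i)) k \<Longrightarrow> liftv i v \<in> vecs (Zprod ks) k"
  by (fastforce simp: liftv_def vecs_def Zmod_def Zprod_def)

lemma proj_liftv: "proj_vec i (liftv i v) = v"
  by (simp add: liftv_def proj_vec_def proj_def comp_def)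

lemma proj_liftv_other: "j \<noteq> i \<Longrightarrow> proj_vec j (liftv i v) = replicate (length v) 0"
  by (simp add: liftv_def proj_vec_def proj_def comp_def map_replicate_const)

lemma proj_vecs: "i < length ks \<Longrightarrow> v \<in> vecs (Zprod ks) k \<Longrightarrow> proj_vec i v \<in> vecs (Zmod (ks!i)) k"
  by (auto simp: vecs_def Zmod_def Zprod_def proj_vec_def proj_def)

lemma proj_controls: "i < length ks \<Longrightarrow> us \<in> controls (Zprod ks) k \<Longrightarrow> (\<lambda>t. proj_vec i (us t)) \<in> controls (Zmod (ks!i)) k"
  by (simp add: controls_def proj_vecs)

lemma liftv_controls: "\<forall>j<length ks. 0 < ks!j \<Longrightarrow> i < length ks \<Longrightarrow> us \<in> controls (Zmod (ks!i)) k \<Longrightarrow> (\<lambda>t. liftv i (us t)) \<in> controls (Zprod ks) k"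
  by (simp add: controls_def liftv_vecs)

definition comb :: "nat list \<Rightarrow> nat \<Rightarrow> (nat \<Rightarrow> nat \<Rightarrow> int list) \<Rightarrow> nat \<Rightarrow> (nat \<Rightarrow> int) list" where
  "comb ks m f t = map (\<lambda>j i. if i < length ks then f i t ! j else 0) [0..<m]"

lemma comb_controls:
  assumes "\<forall>i<length ks. f i \<in> controls (Zmod (ks!i)) m"
  shows "comb ks m f \<in> controls (Zprod ks) m"
  unfolding controls_def
proof (intro allI CollectI)
  fix t
  have "\<forall>i<length ks. length (f i t) = m \<and> set (f i t) \<subseteq> {0..<int (ks!i)}"
    using assms by (auto simp: controls_def vecs_def Zmod_def)
  then show "comb ks m f t \<in> vecs (Zprod ks) m"
    unfolding vecs_def Zprod_def
  proof (intro CollectI conjI)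
    show "length (comb ks m f t) = m" by (simp add: comb_def)
    show "set (comb ks m f t) \<subseteq> car \<lparr>car = {z. (\<forall>i<length ks. 0 \<le> z i \<and> z i < int (ks ! i)) \<and> (\<forall>i\<ge>length ks. z i = 0)},
     ad = (\<lambda>a b i. if i < length ks then (a i + b i) mod int (ks ! i) else 0),
     mu = (\<lambda>a b i. if i < length ks then (a i * b i) mod int (ks ! i) else 0),
     ze = (\<lambda>i. 0) \<rparr>"
    proof
      fix x assume "x \<in> set (comb ks m f t)"
      then obtain j where j: "j < m" and x: "x = (\<lambda>i. if i < length ks then f i t ! j else 0)"
        by (auto simp: comb_def)
      have "\<forall>i<length ks. f i t ! j \<in> {0..<int (ks!i)}"
        using \<open>\<forall>i<length ks. length (f i t) = m \<and> set (f i t) \<subseteq> {0..<int (ks!i)}\<close> j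
        by (metis nth_mem subsetD)
      then show "x \<in> car \<lparr>car = {z. (\<forall>i<length ks. 0 \<le> z i \<and> z i < int (ks ! i)) \<and> (\<forall>i\<ge>length ks. z i = 0)},
     ad = (\<lambda>a b i. if i < length ks then (a i + b i) mod int (ks ! i) else 0),
     mu = (\<lambda>a b i. if i < length ks then (a i * b i) mod int (ks ! i) else 0),
     ze = (\<lambda>i. 0) \<rparr>"
        by (simp add: x)
    qed
  qed
qed

lemma proj_comb:
  assumes "i < length ks" "f i \<in> controls (Zmod (ks!i)) m"
  shows "(\<lambda>t. proj_vec i (comb ks m f t)) = f i"
proof
  fix t
  have "length (f i t) = m" using assms by (auto simp: controls_def vecs_def)
  then show "proj_vec i (comb ks m f t) = f i t"
    using assms(1) by (simp add: comb_def proj_vec_def proj_def comp_def) (metis map_nth)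
qed

lemma length_proj_mat[simp]: "length (proj_mat i M) = length M"
  by (simp add: proj_mat_def)

lemma length_proj_vec[simp]: "length (proj_vec i M) = length M"
  by (simp add: proj_vec_def)

theorem proposition9p2:
  fixes ks :: "nat list" and n m p :: nat
    and A B C :: "(nat \<Rightarrow> int) list list"
  assumes "ks \<noteq> []" and "sorted ks" and "\<forall>k\<in>set ks. prime k"
    and "is_mat (Zprod ks) n n A" and "is_mat (Zprod ks) n m B" and "is_mat (Zprod ks) p n C"
  shows "is_product ks n m A B
    \<and> (controllable (Zprod ks) n m A B \<longleftrightarrow>
           (\<forall>i<length ks. controllable (Zmod (ks ! i)) n m (proj_mat i A) (proj_mat i B)))
    \<and> (observable (Zprod ks) n m A B C \<longleftrightarrow>
           (\<forall>i<length ks. observable (Zmod (ks ! i)) n m (proj_mat i A) (proj_mat i B) (proj_mat i C)))"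
proof (intro conjI)
  have lA: "length A = n" and lB: "length B = n" and lC: "length C = p"
    using assms(4-6) by (auto simp: is_mat_def)
  have pos: "\<forall>i<length ks. 0 < ks ! i"
    using assms(3) by (auto simp: prime_gt_0_nat)
  have ltraj: "\<And>z0 us t. z0 \<in> vecs (Zprod ks) n \<Longrightarrow> length (traj (Zprod ks) A B z0 us t) = n"
    using lA lB by (intro length_traj) (auto simp: vecs_def)
  show "is_product ks n m A B"
    unfolding is_product_def by (simp add: traj_proj)
  show "controllable (Zprod ks) n m A B \<longleftrightarrow>
           (\<forall>i<length ks. controllable (Zmod (ks ! i)) n m (proj_mat i A) (proj_mat i B))"
  proof
    assume H: "controllable (Zprod ks) n m A B"
    show "\<forall>i<length ks. controllable (Zmod (ks ! i)) n m (proj_mat i A) (proj_mat i B)"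
    proof (intro allI impI)
      fix i assume i: "i < length ks"
      show "controllable (Zmod (ks ! i)) n m (proj_mat i A) (proj_mat i B)"
        unfolding controllable_def
      proof (intro ballI)
        fix z0 zd assume z0: "z0 \<in> vecs (Zmod (ks!i)) n" and zd: "zd \<in> vecs (Zmod (ks!i)) n"
        obtain T us where us: "us \<in> controls (Zprod ks) m"
          and tr: "traj (Zprod ks) A B (liftv i z0) us T = liftv i zd"
          using H liftv_vecs[OF pos i z0] liftv_vecs[OF pos i zd] unfolding controllable_def by blast
        have "traj (Zmod (ks!i)) (proj_mat i A) (proj_mat i B) z0 (\<lambda>t. proj_vec i (us t)) T = zd"
          using traj_proj[OF i, of A B "liftv i z0" us T] tr by (simp add: proj_liftv)
        then show "\<exists>T. \<exists>us\<in>controls (Zmod (ks ! i)) m.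
                traj (Zmod (ks ! i)) (proj_mat i A) (proj_mat i B) z0 us T = zd"
          using proj_controls[OF i us] by blast
      qed
    qed
  next
    assume H: "\<forall>i<length ks. controllable (Zmod (ks ! i)) n m (proj_mat i A) (proj_mat i B)"
    have "\<forall>i<length ks. \<exists>K. \<forall>T\<ge>K. \<forall>z0\<in>vecs (Zmod (ks!i)) n. \<forall>zd\<in>vecs (Zmod (ks!i)) n.
           \<exists>us\<in>controls (Zmod (ks!i)) m. traj (Zmod (ks!i)) (proj_mat i A) (proj_mat i B) z0 us T = zd"
      using H pos lA lB by (intro allI impI uniform) auto
    then obtain Kf where Kf: "\<forall>i<length ks. \<forall>T\<ge>Kf i. \<forall>z0\<in>vecs (Zmod (ks!i)) n. \<forall>zd\<in>vecs (Zmod (ks!i)) n.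
           \<exists>us\<in>controls (Zmod (ks!i)) m. traj (Zmod (ks!i)) (proj_mat i A) (proj_mat i B) z0 us T = zd"
      by metis
    define T where "T = (\<Sum>i<length ks. Kf i)"
    have TK: "\<forall>i<length ks. Kf i \<le> T"
      unfolding T_def by (auto intro: member_le_sum)
    show "controllable (Zprod ks) n m A B"
      unfolding controllable_def
    proof (intro ballI)
      fix z0 zd assume z0: "z0 \<in> vecs (Zprod ks) n" and zd: "zd \<in> vecs (Zprod ks) n"
      have "\<forall>i<length ks. \<exists>us. us \<in> controls (Zmod (ks!i)) m \<and>
          traj (Zmod (ks!i)) (proj_mat i A) (proj_mat i B) (proj_vec i z0) us T = proj_vec i zd"
        using Kf TK proj_vecs z0 zd by blast
      then obtain f where f: "\<forall>i<length ks. f i \<in> controls (Zmod (ks!i)) m \<and>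
          traj (Zmod (ks!i)) (proj_mat i A) (proj_mat i B) (proj_vec i z0) (f i) T = proj_vec i zd"
        by metis
      have c: "comb ks m f \<in> controls (Zprod ks) m" using f by (intro comb_controls) auto
      have "traj (Zprod ks) A B z0 (comb ks m f) T = zd"
      proof (rule vec_ext[of _ _ ks])
        show "length (traj (Zprod ks) A B z0 (comb ks m f) T) = length zd"
          using ltraj[OF z0] zd by (simp add: vecs_def)
        show "zo ks (traj (Zprod ks) A B z0 (comb ks m f) T)" using z0 by (rule zo_traj)
        show "zo ks zd" using zd by (rule zo_vecs)
        show "\<forall>i<length ks. proj_vec i (traj (Zprod ks) A B z0 (comb ks m f) T) = proj_vec i zd"
          using f by (simp add: traj_proj proj_comb)
      qed
      then show "\<exists>T. \<exists>us\<in>controls (Zprod ks) m. traj (Zprod ks) A B z0 us T = zd"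
        using c by blast
    qed
  qed
  show "observable (Zprod ks) n m A B C \<longleftrightarrow>
           (\<forall>i<length ks. observable (Zmod (ks ! i)) n m (proj_mat i A) (proj_mat i B) (proj_mat i C))"
  proof
    assume H: "observable (Zprod ks) n m A B C"
    show "\<forall>i<length ks. observable (Zmod (ks ! i)) n m (proj_mat i A) (proj_mat i B) (proj_mat i C)"
    proof (intro allI impI)
      fix i assume i: "i < length ks"
      show "observable (Zmod (ks ! i)) n m (proj_mat i A) (proj_mat i B) (proj_mat i C)"
        unfolding observable_def
      proof (intro ballI impI)
        fix x0 x1 assume x0: "x0 \<in> vecs (Zmod (ks!i)) n" and x1: "x1 \<in> vecs (Zmod (ks!i)) n"
          and ne: "x0 \<noteq> x1"
        have "liftv i x0 \<noteq> liftv i x1" using ne proj_liftv by metis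
        then obtain us t where us: "us \<in> controls (Zprod ks) m"
          and d: "net_output (Zprod ks) A B C (liftv i x0) us t \<noteq> net_output (Zprod ks) A B C (liftv i x1) us t"
          using H liftv_vecs[OF pos i x0] liftv_vecs[OF pos i x1] unfolding observable_def by blast
        have lx: "length x0 = n" "length x1 = n" using x0 x1 by (auto simp: vecs_def)
        have "proj_vec i (net_output (Zprod ks) A B C (liftv i x0) us t)
            \<noteq> proj_vec i (net_output (Zprod ks) A B C (liftv i x1) us t)"
        proof
          assume eq: "proj_vec i (net_output (Zprod ks) A B C (liftv i x0) us t)
            = proj_vec i (net_output (Zprod ks) A B C (liftv i x1) us t)"
          have "net_output (Zprod ks) A B C (liftv i x0) us t = net_output (Zprod ks) A B C (liftv i x1) us t"
          proof (rule vec_ext[of _ _ ks])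
            show "length (net_output (Zprod ks) A B C (liftv i x0) us t) = length (net_output (Zprod ks) A B C (liftv i x1) us t)"
              by (simp add: net_output_def mat_vec_def)
            show "zo ks (net_output (Zprod ks) A B C (liftv i x0) us t)" by (rule zo_output)
            show "zo ks (net_output (Zprod ks) A B C (liftv i x1) us t)" by (rule zo_output)
            show "\<forall>j<length ks. proj_vec j (net_output (Zprod ks) A B C (liftv i x0) us t)
                  = proj_vec j (net_output (Zprod ks) A B C (liftv i x1) us t)"
            proof (intro allI impI)
              fix j assume j: "j < length ks"
              show "proj_vec j (net_output (Zprod ks) A B C (liftv i x0) us t)
                  = proj_vec j (net_output (Zprod ks) A B C (liftv i x1) us t)"
              proof (cases "j = i")
                case True then show ?thesis using eq by simp
              next
                case False then show ?thesis
                  using j lx by (simp add: output_proj proj_liftv_other)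
              qed
            qed
          qed
          then show False using d by simp
        qed
        then have "net_output (Zmod (ks!i)) (proj_mat i A) (proj_mat i B) (proj_mat i C) x0 (\<lambda>t. proj_vec i (us t)) t
           \<noteq> net_output (Zmod (ks!i)) (proj_mat i A) (proj_mat i B) (proj_mat i C) x1 (\<lambda>t. proj_vec i (us t)) t"
          by (simp add: output_proj[OF i] proj_liftv)
        then show "\<exists>us\<in>controls (Zmod (ks ! i)) m. \<exists>t.
            net_output (Zmod (ks ! i)) (proj_mat i A) (proj_mat i B) (proj_mat i C) x0 us t \<noteq>
            net_output (Zmod (ks ! i)) (proj_mat i A) (proj_mat i B) (proj_mat i C) x1 us t"
          using proj_controls[OF i us] by blast
      qed
    qed
  next
    assume H: "\<forall>i<length ks. observable (Zmod (ks ! i)) n m (proj_mat i A) (proj_mat i B) (proj_mat i C)"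
    show "observable (Zprod ks) n m A B C"
      unfolding observable_def
    proof (intro ballI impI)
      fix x0 x1 assume x0: "x0 \<in> vecs (Zprod ks) n" and x1: "x1 \<in> vecs (Zprod ks) n"
        and ne: "x0 \<noteq> x1"
      have "\<exists>i<length ks. proj_vec i x0 \<noteq> proj_vec i x1"
      proof (rule ccontr)
        assume "\<not> ?thesis"
        then have "x0 = x1" using x0 x1
          by (intro vec_ext[of _ _ ks]) (auto simp: vecs_def zo_vecs)
        then show False using ne by simp
      qed
      then obtain i where i: "i < length ks" and ne': "proj_vec i x0 \<noteq> proj_vec i x1" by blast
      obtain us t where us: "us \<in> controls (Zmod (ks!i)) m"
        and d: "net_output (Zmod (ks!i)) (proj_mat i A) (proj_mat i B) (proj_mat i C) (proj_vec i x0) us t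
           \<noteq> net_output (Zmod (ks!i)) (proj_mat i A) (proj_mat i B) (proj_mat i C) (proj_vec i x1) us t"
        using H i proj_vecs[OF i x0] proj_vecs[OF i x1] ne' unfolding observable_def by blast
      have pl: "(\<lambda>t. proj_vec i (liftv i (us t))) = us" by (simp add: proj_liftv)
      have "proj_vec i (net_output (Zprod ks) A B C x0 (\<lambda>t. liftv i (us t)) t)
         \<noteq> proj_vec i (net_output (Zprod ks) A B C x1 (\<lambda>t. liftv i (us t)) t)"
        using d by (simp add: output_proj[OF i] pl)
      then have "net_output (Zprod ks) A B C x0 (\<lambda>t. liftv i (us t)) t
         \<noteq> net_output (Zprod ks) A B C x1 (\<lambda>t. liftv i (us t)) t" by metis
      then show "\<exists>us\<in>controls (Zprod ks) m. \<exists>t.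
          net_output (Zprod ks) A B C x0 us t \<noteq> net_output (Zprod ks) A B C x1 us t"
        using liftv_controls[OF pos i us] by blast
    qed
  qed
qed

end
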